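(* Let $\mathbb B$ be a separable uniformly convex Banach space with dual $\mathbb B^*$, and let $T>0$. Let $(u_n)$ be a bounded sequence in $L^1(\Omega;C([0,T];\mathbb B))$ and $u\in L^1(\Omega;C([0,T];\mathbb B))$ such that $$\lim_{n\to\infty}\mathbb E\Big(\sup_{t\in[0,T]}|\langle\phi,u_n(t)-u(t)\rangle|\Big)=0\ \ \forall\phi\in\mathbb B^*,\qquad \lim_{n\to\infty}\mathbb E\Big(\sup_{t\in[0,T]}\big|\|u_n(t)\|_{\mathbb B}-\|u(t)\|_{\mathbb B}\big|\Big)=0.$$ Then $\sup_{t\in[0,T]}\|u_n(t)-u(t)\|_{\mathbb B}\to0$ in probability as $n\to\infty$.
   Context: $(\Omega,\mathcal F,P)$ is a probability space; $\langle\cdot,\cdot\rangle$ is the duality pairing between $\mathbb B^*$ and $\mathbb B$. *)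

theory Defs
  imports "HOL-Probability.Probability"
begin

definition uniformly_convex :: "'b::real_normed_vector itself \<Rightarrow> bool" where
  "uniformly_convex (_::'b itself) \<longleftrightarrow>
     (\<forall>e>0. \<exists>d>0. \<forall>x y::'b. norm x \<le> 1 \<and> norm y \<le> 1 \<and> norm (x - y) \<ge> e
        \<longrightarrow> norm ((1/2) *\<^sub>R (x + y)) \<le> 1 - d)"

text \<open>Elements of C([0,T];B), represented as bounded continuous functions on the reals that
  are constant outside [0,T] (i.e. f t = f (clamp t)). This subspace of the bcontfun space is
  isometric to C([0,T];B) with the sup norm.\<close>
definition in_CT :: "real \<Rightarrow> (real \<Rightarrow>\<^sub>C 'b::real_normed_vector) \<Rightarrow> bool" where
  "in_CT T f \<longleftrightarrow> (\<forall>t. apply_bcontfun f t = apply_bcontfun f (max 0 (min T t)))"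

end

theory Submission
  imports Defs
begin

definition hbA :: "'b::real_normed_vector \<Rightarrow> ('b \<times> real) set set" where
  "hbA d = {G. subspace G \<and> (\<forall>(x,a)\<in>G. a \<le> norm x) \<and> range (\<lambda>t. (t *\<^sub>R d, t * norm d)) \<subseteq> G}"

lemma hb_extend:
  fixes G :: "('b::real_normed_vector \<times> real) set"
  assumes sub: "subspace G" and dom: "\<forall>(x,a)\<in>G. a \<le> norm x" and x: "x \<notin> fst ` G"
  shows "\<exists>G'. subspace G' \<and> (\<forall>(x,a)\<in>G'. a \<le> norm x) \<and> G \<subseteq> G' \<and> G' \<noteq> G"
proof -
  have add: "(y+z, b+b') \<in> G" if "(y,b)\<in>G" "(z,b')\<in>G" for y z b b'
    using sub that subspace_add[OF sub that] by simp
  have scl: "(c *\<^sub>R y, c * b) \<in> G" if "(y,b)\<in>G" for y b c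
    using subspace_scale[OF sub that, of c] by simp
  have z0: "(0,0) \<in> G" using subspace_0[OF sub] by (simp add: zero_prod_def)
  define S where "S = (\<lambda>(y,b). b - norm (y - x)) ` G"
  have bnd: "s \<le> norm (z + x) - b'" if "s \<in> S" "(z,b')\<in>G" for s z b'
  proof -
    obtain y b where yb: "(y,b)\<in>G" "s = b - norm (y - x)" using \<open>s \<in> S\<close> unfolding S_def by force
    have "b + b' \<le> norm (y + z)" using dom add[OF yb(1) that(2)] by auto
    also have "\<dots> \<le> norm (y - x) + norm (z + x)"
      using norm_triangle_ineq[of "y - x" "z + x"] by simp
    finally show ?thesis using yb by simp
  qed
  have Sne: "S \<noteq> {}" using z0 unfolding S_def by auto
  have Sbdd: "bdd_above S" using bnd[OF _ z0] by (metis bdd_aboveI)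
  define c where "c = Sup S"
  have c1: "b - norm (y - x) \<le> c" if "(y,b)\<in>G" for y b
    unfolding c_def using that Sbdd by (intro cSup_upper) (auto simp: S_def)
  have c2: "c \<le> norm (z + x) - b'" if "(z,b')\<in>G" for z b'
    unfolding c_def using Sne by (intro cSup_least) (auto intro: bnd[OF _ that])
  define G' where "G' = {(y + t *\<^sub>R x, b + t * c) | y b t. (y,b) \<in> G}"
  have "subspace G'"
    unfolding subspace_def
  proof (intro conjI ballI allI)
    show "0 \<in> G'" unfolding G'_def using z0 by (force simp: zero_prod_def)
  next
    fix p q assume "p \<in> G'" "q \<in> G'"
    then obtain y b t y' b' t' where "(y,b)\<in>G" "(y',b')\<in>G" "p = (y + t *\<^sub>R x, b + t * c)"
      "q = (y' + t' *\<^sub>R x, b' + t' * c)" unfolding G'_def by blast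
    moreover have "p + q = ((y+y') + (t+t') *\<^sub>R x, (b+b') + (t+t') * c)"
      using calculation by (simp add: algebra_simps scaleR_add_left)
    ultimately show "p + q \<in> G'" unfolding G'_def using add by blast
  next
    fix r p assume "p \<in> G'"
    then obtain y b t where "(y,b)\<in>G" "p = (y + t *\<^sub>R x, b + t * c)" unfolding G'_def by blast
    moreover have "r *\<^sub>R p = (r *\<^sub>R y + (r*t) *\<^sub>R x, r*b + (r*t) * c)"
      using calculation by (simp add: algebra_simps scaleR_add_right)
    ultimately show "r *\<^sub>R p \<in> G'" unfolding G'_def using scl by blast
  qed
  moreover have "\<forall>(z,a)\<in>G'. a \<le> norm z"
  proof (clarsimp simp: G'_def)
    fix y b t assume yb: "(y,b)\<in>G"
    show "b + t * c \<le> norm (y + t *\<^sub>R x)"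
    proof (cases "t = 0")
      case True thus ?thesis using dom yb by auto
    next
      case False
      show ?thesis
      proof (cases "t > 0")
        case True
        have "c \<le> norm ((1/t) *\<^sub>R y + x) - (1/t) * b" using c2[OF scl[OF yb, of "1/t"]] .
        hence "t * c \<le> t * (norm ((1/t) *\<^sub>R y + x) - (1/t) * b)" using True by simp
        also have "\<dots> = norm (t *\<^sub>R ((1/t) *\<^sub>R y + x)) - b" using True
          by (simp add: right_diff_distrib)
        also have "t *\<^sub>R ((1/t) *\<^sub>R y + x) = y + t *\<^sub>R x" using True
          by (simp add: scaleR_add_right)
        finally show ?thesis by simp
      next
        case False
        obtain s where s: "s > 0" and s_def: "t = - s" using False \<open>t \<noteq> 0\<close>
          by (metis neg_0_less_iff_less linorder_neqE_linordered_idom minus_minus)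
        have "(1/s) * b - norm ((1/s) *\<^sub>R y - x) \<le> c" using c1[OF scl[OF yb, of "1/s"]] .
        hence "s * ((1/s) * b - norm ((1/s) *\<^sub>R y - x)) \<le> s * c" using s by simp
        hence "b - norm (s *\<^sub>R ((1/s) *\<^sub>R y - x)) \<le> s * c" using s
          by (simp add: right_diff_distrib)
        moreover have "s *\<^sub>R ((1/s) *\<^sub>R y - x) = y + t *\<^sub>R x" using s s_def
          by (simp add: scaleR_diff_right)
        ultimately have "b - s * c \<le> norm (y + t *\<^sub>R x)" by simp
        thus ?thesis using s_def by simp
      qed
    qed
  qed
  moreover have "G \<subseteq> G'" unfolding G'_def by force
  moreover have "(x, c) \<in> G'" unfolding G'_def using z0 by force
  hence "G' \<noteq> G" using x by force
  ultimately show ?thesis by blast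
qed

lemma hb_unique:
  assumes "subspace G" "\<forall>(x,a)\<in>G. a \<le> norm x" "(x,a) \<in> G" "(x,b) \<in> G"
  shows "a = b"
proof -
  have "(x,a) - (x,b) \<in> G" "(x,b) - (x,a) \<in> G"
    by (rule subspace_diff[OF assms(1) assms(3) assms(4)], rule subspace_diff[OF assms(1) assms(4) assms(3)])
  hence "(0, a - b) \<in> G" "(0, b - a) \<in> G" by simp_all
  hence "a - b \<le> 0" "b - a \<le> 0" using assms(2) by fastforce+
  thus ?thesis by simp
qed

lemma norming_functional:
  fixes d :: "'b::real_normed_vector"
  shows "\<exists>\<phi>. bounded_linear \<phi> \<and> (\<forall>x. \<bar>\<phi> x\<bar> \<le> norm x) \<and> \<phi> d = norm d"
proof -
  define G0 where "G0 = range (\<lambda>t. (t *\<^sub>R d, t * norm d))"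
  have sG0: "subspace G0"
    unfolding G0_def subspace_def
  proof (intro conjI ballI allI)
    show "0 \<in> range (\<lambda>t. (t *\<^sub>R d, t * norm d))" by (force simp: zero_prod_def)
  next
    fix p q assume "p \<in> range (\<lambda>t. (t *\<^sub>R d, t * norm d))" "q \<in> range (\<lambda>t. (t *\<^sub>R d, t * norm d))"
    then obtain a b where "p = (a *\<^sub>R d, a * norm d)" "q = (b *\<^sub>R d, b * norm d)" by blast
    then have "p + q = ((a+b) *\<^sub>R d, (a+b) * norm d)" by (simp add: algebra_simps scaleR_add_left)
    then show "p + q \<in> range (\<lambda>t. (t *\<^sub>R d, t * norm d))" by blast
  next
    fix r p assume "p \<in> range (\<lambda>t. (t *\<^sub>R d, t * norm d))"
    then obtain a where "p = (a *\<^sub>R d, a * norm d)" by blast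
    then have "r *\<^sub>R p = ((r*a) *\<^sub>R d, (r*a) * norm d)" by simp
    then show "r *\<^sub>R p \<in> range (\<lambda>t. (t *\<^sub>R d, t * norm d))" by blast
  qed
  have dG0: "\<forall>(x,a)\<in>G0. a \<le> norm x"
    unfolding G0_def by (auto intro: mult_right_mono)
  have G0A: "G0 \<in> hbA d" using sG0 dG0 unfolding hbA_def G0_def by blast
  have "\<forall>C\<in>chains (hbA d). \<exists>U\<in>hbA d. \<forall>X\<in>C. X \<subseteq> U"
  proof
    fix C assume C: "C \<in> chains (hbA d)"
    show "\<exists>U\<in>hbA d. \<forall>X\<in>C. X \<subseteq> U"
    proof (cases "C = {}")
      case True thus ?thesis using G0A by blast
    next
      case False
      have CA: "C \<subseteq> hbA d" and ch: "\<And>X Y. X \<in> C \<Longrightarrow> Y \<in> C \<Longrightarrow> X \<subseteq> Y \<or> Y \<subseteq> X"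
        using C unfolding chains_def chain_subset_def by blast+
      have "\<Union>C \<in> hbA d"
        unfolding hbA_def
      proof (intro CollectI conjI)
        show "subspace (\<Union>C)" unfolding subspace_def
        proof (intro conjI ballI allI)
          obtain X where "X \<in> C" using False by blast
          thus "0 \<in> \<Union>C" using CA subspace_0 unfolding hbA_def by blast
        next
          fix p q assume "p \<in> \<Union>C" "q \<in> \<Union>C"
          then obtain X Y where XY: "X \<in> C" "Y \<in> C" "p \<in> X" "q \<in> Y" by blast
          show "p + q \<in> \<Union>C"
          proof (cases "X \<subseteq> Y")
            case True
            have "subspace Y" using CA XY unfolding hbA_def by blast
            thus ?thesis using subspace_add XY True by blast
          next
            case False
            hence "Y \<subseteq> X" using ch XY by blast
            have "subspace X" using CA XY unfolding hbA_def by blast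
            thus ?thesis using subspace_add XY \<open>Y \<subseteq> X\<close> by blast
          qed
        next
          fix r p assume "p \<in> \<Union>C"
          then obtain X where X: "X \<in> C" "p \<in> X" by blast
          have "subspace X" using CA X unfolding hbA_def by blast
          thus "r *\<^sub>R p \<in> \<Union>C" using subspace_scale X by blast
        qed
        show "\<forall>(x,a)\<in>\<Union>C. a \<le> norm x" using CA unfolding hbA_def by blast
        obtain X where "X \<in> C" using False by blast
        thus "range (\<lambda>t. (t *\<^sub>R d, t * norm d)) \<subseteq> \<Union>C" using CA unfolding hbA_def by blast
      qed
      thus ?thesis by blast
    qed
  qed
  from Zorn_Lemma2[OF this] obtain M where MA: "M \<in> hbA d"
    and max: "\<forall>X\<in>hbA d. M \<subseteq> X \<longrightarrow> X = M" by blast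
  have sub: "subspace M" and dom: "\<forall>(x,a)\<in>M. a \<le> norm x" and G0M: "G0 \<subseteq> M"
    using MA unfolding hbA_def G0_def by blast+
  have tot: "\<exists>a. (x,a) \<in> M" for x
  proof (rule ccontr)
    assume "\<nexists>a. (x,a) \<in> M"
    hence "x \<notin> fst ` M" by force
    from hb_extend[OF sub dom this] obtain G' where G': "subspace G'" "\<forall>(x,a)\<in>G'. a \<le> norm x"
      "M \<subseteq> G'" "G' \<noteq> M" by blast
    have "G' \<in> hbA d" using G' G0M unfolding hbA_def G0_def by blast
    thus False using max G' by blast
  qed
  define \<phi> where "\<phi> x = (SOME a. (x,a) \<in> M)" for x
  have phiM: "(x, \<phi> x) \<in> M" for x unfolding \<phi>_def using tot[of x] by (rule someI_ex)
  have phi_eq: "\<phi> x = a" if "(x,a) \<in> M" for x a using hb_unique[OF sub dom phiM that] .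
  have add: "\<phi> (x + y) = \<phi> x + \<phi> y" for x y
  proof -
    have "(x, \<phi> x) + (y, \<phi> y) \<in> M" using subspace_add[OF sub phiM phiM] .
    thus ?thesis using phi_eq by simp
  qed
  have scl: "\<phi> (r *\<^sub>R x) = r *\<^sub>R \<phi> x" for r x
  proof -
    have "r *\<^sub>R (x, \<phi> x) \<in> M" using subspace_scale[OF sub phiM] .
    thus ?thesis using phi_eq by simp
  qed
  have le: "\<phi> x \<le> norm x" for x using dom phiM by blast
  have abs: "\<bar>\<phi> x\<bar> \<le> norm x" for x
  proof -
    have "\<phi> (-x) = - \<phi> x" using scl[of "-1" x] by simp
    thus ?thesis using le[of x] le[of "-x"] by simp
  qed
  have "bounded_linear \<phi>"
    by (rule bounded_linear_intro[where K=1]) (use add scl abs in auto)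
  moreover have "\<phi> d = norm d"
  proof -
    have "(1 *\<^sub>R d, 1 * norm d) \<in> G0" unfolding G0_def by blast
    hence "(d, norm d) \<in> M" using G0M by auto
    thus ?thesis by (rule phi_eq)
  qed
  ultimately show ?thesis using abs by blast
qed


lemma uc_key:
  assumes uc: "uniformly_convex TYPE('b::real_normed_vector)" and ep: "\<epsilon> > 0" and R: "R \<ge> 0"
  shows "\<exists>\<eta>>0. \<forall>(a::'b) d \<phi>. bounded_linear \<phi> \<longrightarrow> (\<forall>x. \<bar>\<phi> x\<bar> \<le> norm x) \<longrightarrow> \<phi> d = norm d
     \<longrightarrow> norm d \<le> R \<longrightarrow> norm a \<le> norm d + \<eta> \<longrightarrow> \<phi> a \<ge> norm d - \<eta> \<longrightarrow> norm (a - d) \<le> \<epsilon>"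
proof -
  define e where "e = \<epsilon> / (R + 1)"
  have e: "e > 0" using ep R by (simp add: e_def)
  have "\<exists>\<delta>>0. \<forall>x y::'b. norm x \<le> 1 \<and> norm y \<le> 1 \<and> norm (x - y) \<ge> e
        \<longrightarrow> norm ((1/2) *\<^sub>R (x + y)) \<le> 1 - \<delta>"
    using uc e unfolding uniformly_convex_def by blast
  then obtain \<delta> where dl: "\<delta> > 0" and dlp0: "\<forall>x y::'b. norm x \<le> 1 \<and> norm y \<le> 1 \<and> norm (x - y) \<ge> e
        \<longrightarrow> norm ((1/2) *\<^sub>R (x + y)) \<le> 1 - \<delta>" by blast
  have dlp: "norm ((1/2) *\<^sub>R (x + y)) \<le> 1 - \<delta>" if "norm x \<le> 1" "norm y \<le> 1" "norm (x - y) \<ge> e" for x y :: 'b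
    using dlp0 that by blast
  define \<eta> where "\<eta> = min 1 (\<delta> * \<epsilon> / 6)"
  have eta: "\<eta> > 0" "\<eta> \<le> 1" "\<eta> \<le> \<delta> * \<epsilon> / 6" using dl ep by (auto simp: \<eta>_def)
  have "norm (a - d) \<le> \<epsilon>" if bl: "bounded_linear \<phi>" and ph: "\<forall>x. \<bar>\<phi> x\<bar> \<le> norm x" and pd: "\<phi> d = norm d"
    and dR: "norm d \<le> R" and na: "norm a \<le> norm d + \<eta>" and pa: "\<phi> a \<ge> norm d - \<eta>" for a d :: 'b and \<phi>
  proof -
    define r where "r = norm d + \<eta>"
    have r0: "r > 0" using eta by (simp add: r_def add_nonneg_pos)
    show ?thesis
    proof (cases "r \<le> \<epsilon> / 2")
      case True
      have "norm (a - d) \<le> norm a + norm d" by (rule norm_triangle_ineq4)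
      also have "\<dots> \<le> 2 * r" using na eta unfolding r_def by simp
      finally show ?thesis using True by simp
    next
      case False
      define x where "x = (1/r) *\<^sub>R a"
      define y where "y = (1/r) *\<^sub>R d"
      have "norm x = norm a / r" using r0 by (simp add: x_def)
      hence nx: "norm x \<le> 1" using na r0 by (simp add: divide_le_eq_1_pos r_def)
      have "norm y = norm d / r" using r0 by (simp add: y_def)
      hence ny: "norm y \<le> 1" using eta r0 by (simp add: divide_le_eq_1_pos r_def)
      interpret L: bounded_linear \<phi> by (rule bl)
      have "\<phi> ((1/2) *\<^sub>R (x + y)) = (1/2) * ((1/r) * \<phi> a + (1/r) * \<phi> d)"
        by (simp add: x_def y_def L.scaleR L.add)
      also have "\<dots> = (\<phi> a + \<phi> d) / (2 * r)" by (simp add: add_divide_distrib)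
      also have "\<dots> \<ge> (2 * norm d - \<eta>) / (2 * r)" using pa pd r0
        by (intro divide_right_mono) auto
      finally have "\<phi> ((1/2) *\<^sub>R (x + y)) \<ge> (2 * norm d - \<eta>) / (2 * r)" .
      moreover have "(2 * norm d - \<eta>) / (2 * r) = 1 - 3 * \<eta> / (2 * r)"
        using r0 by (simp add: r_def field_simps)
      moreover have "3 * \<eta> / (2 * r) < \<delta>"
      proof -
        have "3 * \<eta> / (2 * r) \<le> 3 * \<eta> / \<epsilon>" using False ep eta
          by (intro divide_left_mono) auto
        also have "\<dots> \<le> \<delta> / 2" using eta ep by (simp add: pos_divide_le_eq)
        finally show ?thesis using dl by simp
      qed
      ultimately have "norm ((1/2) *\<^sub>R (x + y)) > 1 - \<delta>"
        using ph[rule_format, of "(1/2) *\<^sub>R (x + y)"] by linarith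
      hence "norm (x - y) < e" using dlp[OF nx ny] by force
      moreover have "x - y = (1/r) *\<^sub>R (a - d)" by (simp add: x_def y_def scaleR_diff_right)
      ultimately have "norm (a - d) / r < e" using r0 by simp
      hence "norm (a - d) < e * r" using r0 by (simp add: pos_divide_less_eq)
      also have "e * r \<le> e * (R + 1)" using e dR eta by (intro mult_left_mono) (auto simp: r_def)
      also have "\<dots> = \<epsilon>" using R by (simp add: e_def)
      finally show ?thesis by simp
    qed
  qed
  thus ?thesis using eta by blast
qed


lemma uc_key':
  assumes uc: "uniformly_convex TYPE('b::real_normed_vector)" and ep: "\<epsilon> > 0" and R: "R \<ge> 0"
  obtains \<eta> where "\<eta> > 0" "\<And>(a::'b) d \<phi>. bounded_linear \<phi> \<Longrightarrow> (\<forall>x. \<bar>\<phi> x\<bar> \<le> norm x) \<Longrightarrow> \<phi> d = norm d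
     \<Longrightarrow> norm d \<le> R \<Longrightarrow> norm a \<le> norm d + \<eta> \<Longrightarrow> \<phi> a \<ge> norm d - \<eta> \<Longrightarrow> norm (a - d) \<le> \<epsilon>"
proof -
  from uc_key[OF uc ep R] obtain \<eta> where e0: "\<eta> > 0" and H: "\<forall>(a::'b) d \<phi>. bounded_linear \<phi> \<longrightarrow> (\<forall>x. \<bar>\<phi> x\<bar> \<le> norm x) \<longrightarrow> \<phi> d = norm d
     \<longrightarrow> norm d \<le> R \<longrightarrow> norm a \<le> norm d + \<eta> \<longrightarrow> \<phi> a \<ge> norm d - \<eta> \<longrightarrow> norm (a - d) \<le> \<epsilon>"
    by (elim exE conjE)
  show ?thesis
  proof (rule that[OF e0])
    fix a :: 'b and d \<phi>
    assume A: "bounded_linear \<phi>" "\<forall>x. \<bar>\<phi> x\<bar> \<le> norm x" "\<phi> d = norm d" "norm d \<le> R"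
      "norm a \<le> norm d + \<eta>" "\<phi> a \<ge> norm d - \<eta>"
    show "norm (a - d) \<le> \<epsilon>"
      using H[THEN spec[of _ a], THEN spec[of _ d], THEN spec[of _ \<phi>]] A by blast
  qed
qed

lemma cont_eval: "continuous_on UNIV (\<lambda>f::real \<Rightarrow>\<^sub>C 'b::real_normed_vector. apply_bcontfun f t)"
proof (rule lipschitz_on_continuous_on)
  show "1-lipschitz_on UNIV (\<lambda>f::real \<Rightarrow>\<^sub>C 'b. apply_bcontfun f t)"
    by (rule lipschitz_onI) (auto simp: dist_bounded)
qed

lemma meas_eval:
  fixes f :: "'a \<Rightarrow> (real \<Rightarrow>\<^sub>C 'b::real_normed_vector)"
  assumes "f \<in> borel_measurable M" "continuous_on UNIV h"
  shows "(\<lambda>\<omega>. h (apply_bcontfun (f \<omega>) t)) \<in> borel_measurable M"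
proof -
  have "continuous_on UNIV (\<lambda>g::real \<Rightarrow>\<^sub>C 'b. h (apply_bcontfun g t))"
    using continuous_on_compose2[OF assms(2) cont_eval[of t]] by simp
  thus ?thesis using borel_measurable_continuous_on assms(1) by blast
qed

lemma bdd_cont_Icc:
  fixes f :: "real \<Rightarrow> real"
  assumes "continuous_on {0..T} f"
  shows "bdd_above (f ` {0..T})"
  by (intro bounded_imp_bdd_above compact_imp_bounded compact_continuous_image[OF assms compact_Icc])

lemma sup_rat:
  fixes f :: "real \<Rightarrow> real"
  assumes f: "continuous_on {0..T} f" and T: "T > 0"
  shows "(SUP t\<in>{0..T}. f t) = (SUP t\<in>{0..T}\<inter>\<rat>. f t)"
proof (rule antisym)
  have bdd: "bdd_above (f ` {0..T})" by (rule bdd_cont_Icc[OF f])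
  have bddQ: "bdd_above (f ` ({0..T}\<inter>\<rat>))" using bdd by (meson bdd_above_mono image_mono inf_le1)
  have "0 \<in> {0..T}\<inter>\<rat>" using T by auto
  hence neQ: "{0..T}\<inter>\<rat> \<noteq> {}" by blast
  show "(SUP t\<in>{0..T}\<inter>\<rat>. f t) \<le> (SUP t\<in>{0..T}. f t)"
    using bdd neQ by (intro cSUP_subset_mono) auto
  show "(SUP t\<in>{0..T}. f t) \<le> (SUP t\<in>{0..T}\<inter>\<rat>. f t)"
  proof (rule cSUP_least)
    show "{0..T} \<noteq> {}" using T by simp
    fix t assume t: "t \<in> {0..T}"
    define S where "S = (SUP t\<in>{0..T}\<inter>\<rat>. f t)"
    show "f t \<le> S"
    proof (rule ccontr)
      assume "\<not> f t \<le> S"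
      hence e: "f t - S > 0" by simp
      obtain d where d: "d > 0" and dd: "\<And>x'. x' \<in> {0..T} \<Longrightarrow> dist x' t < d \<Longrightarrow> dist (f x') (f t) < f t - S"
        using f t e unfolding continuous_on_iff by meson
      obtain q where q: "q \<in> {0..T}\<inter>\<rat>" "dist q t < d"
      proof (cases "t < T")
        case True
        obtain q where "q \<in> \<rat>" "t < q" "q < min T (t + d)"
          using Rats_dense_in_real[of t "min T (t+d)"] True d by auto
        hence "q \<in> {0..T}\<inter>\<rat>" "dist q t < d" using t by (auto simp: dist_real_def)
        thus ?thesis using that by blast
      next
        case False
        hence tT: "t = T" using t by simp
        obtain q where "q \<in> \<rat>" "max 0 (T - d) < q" "q < T"
          using Rats_dense_in_real[of "max 0 (T - d)" T] T d by auto
        hence "q \<in> {0..T}\<inter>\<rat>" "dist q t < d" using tT by (auto simp: dist_real_def)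
        thus ?thesis using that by blast
      qed
      have "f q \<le> S" unfolding S_def using q bddQ by (intro cSUP_upper) auto
      moreover have "dist (f q) (f t) < f t - S" using dd q by auto
      ultimately show False by (simp add: dist_real_def)
    qed
  qed
qed

lemma meas_sup:
  fixes F :: "'a \<Rightarrow> real \<Rightarrow> real"
  assumes m: "\<And>t. (\<lambda>\<omega>. F \<omega> t) \<in> borel_measurable M"
    and c: "\<And>\<omega>. continuous_on {0..T} (F \<omega>)" and T: "T > 0"
  shows "(\<lambda>\<omega>. SUP t\<in>{0..T}. F \<omega> t) \<in> borel_measurable M"
proof -
  have eq: "(\<lambda>\<omega>. SUP t\<in>{0..T}. F \<omega> t) = (\<lambda>\<omega>. SUP t\<in>{0..T}\<inter>\<rat>. F \<omega> t)"
    using sup_rat[OF c T] by auto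
  have cnt: "countable ({0..T}\<inter>\<rat>)" by (meson countable_rat countable_subset inf_le2)
  show ?thesis unfolding eq
  proof (rule borel_measurable_cSUP[OF cnt])
    show "\<And>i. i \<in> {0..T} \<inter> \<rat> \<Longrightarrow> (\<lambda>\<omega>. F \<omega> i) \<in> borel_measurable M" using m by simp
    fix \<omega> show "bdd_above ((\<lambda>i. F \<omega> i) ` ({0..T}\<inter>\<rat>))"
      using bdd_cont_Icc[OF c[of \<omega>]] by (meson bdd_above_mono image_mono inf_le1)
  qed
qed

lemma markov_sup:
  fixes F :: "'a \<Rightarrow> real \<Rightarrow> real"
  assumes P: "prob_space M" and T: "T > 0"
    and m: "\<And>t. (\<lambda>\<omega>. F \<omega> t) \<in> borel_measurable M"
    and c: "\<And>\<omega>. continuous_on {0..T} (F \<omega>)"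
    and nn: "\<And>\<omega> t. 0 \<le> F \<omega> t" and bd: "\<And>\<omega> t. F \<omega> t \<le> B \<omega>"
    and B: "integrable M B" and g: "\<gamma> > 0"
  shows "integrable M (\<lambda>\<omega>. SUP t\<in>{0..T}. F \<omega> t)"
    and "measure M {\<omega>\<in>space M. (SUP t\<in>{0..T}. F \<omega> t) \<ge> \<gamma>} \<le> (\<integral>\<omega>. (SUP t\<in>{0..T}. F \<omega> t) \<partial>M) / \<gamma>"
    and "\<And>\<omega>. 0 \<le> (SUP t\<in>{0..T}. F \<omega> t)"
proof -
  have ms: "(\<lambda>\<omega>. SUP t\<in>{0..T}. F \<omega> t) \<in> borel_measurable M" by (rule meas_sup[OF m c T])
  have ne: "{0..T} \<noteq> {}" using T by simp
  have bdd: "bdd_above (F \<omega> ` {0..T})" for \<omega> using bdd_cont_Icc[OF c] .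
  show nn2: "0 \<le> (SUP t\<in>{0..T}. F \<omega> t)" for \<omega>
    using nn[of \<omega> 0] cSUP_upper[OF _ bdd, of 0 \<omega>] T by (meson atLeastAtMost_iff less_le order_trans order_refl)
  have le: "(SUP t\<in>{0..T}. F \<omega> t) \<le> B \<omega>" for \<omega> using ne bd by (intro cSUP_least) auto
  show int: "integrable M (\<lambda>\<omega>. SUP t\<in>{0..T}. F \<omega> t)"
    by (rule Bochner_Integration.integrable_bound[OF B ms], rule AE_I2) (metis abs_ge_self le order_trans real_norm_def abs_of_nonneg nn2)
  show "measure M {\<omega>\<in>space M. (SUP t\<in>{0..T}. F \<omega> t) \<ge> \<gamma>} \<le> (\<integral>\<omega>. (SUP t\<in>{0..T}. F \<omega> t) \<partial>M) / \<gamma>"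
    by (rule integral_Markov_inequality_measure[OF int, where A="space M"]) (use nn2 g in auto)
qed

theorem mainTheorem7:
  fixes M :: "'a measure"
    and T :: real
    and u :: "nat \<Rightarrow> 'a \<Rightarrow> (real \<Rightarrow>\<^sub>C 'b::banach)"
    and v :: "'a \<Rightarrow> (real \<Rightarrow>\<^sub>C 'b)"
  assumes "prob_space M"
    and "separable_space (euclidean :: 'b topology)"
    and "uniformly_convex TYPE('b)"
    and "T > 0"
    and "\<And>n \<omega>. in_CT T (u n \<omega>)"
    and "\<And>\<omega>. in_CT T (v \<omega>)"
    and "\<And>n. u n \<in> borel_measurable M"
    and "\<And>n. integrable M (\<lambda>\<omega>. norm (u n \<omega>))"
    and "v \<in> borel_measurable M"
    and "integrable M (\<lambda>\<omega>. norm (v \<omega>))"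
    and "\<exists>C. \<forall>n. (\<integral>\<omega>. norm (u n \<omega>) \<partial>M) \<le> C"
    and "\<And>\<phi>. bounded_linear (\<phi> :: 'b \<Rightarrow> real) \<Longrightarrow>
           (\<lambda>n. \<integral>\<omega>. (SUP t\<in>{0..T}. \<bar>\<phi> (u n \<omega> t - v \<omega> t)\<bar>) \<partial>M) \<longlonglongrightarrow> 0"
    and "(\<lambda>n. \<integral>\<omega>. (SUP t\<in>{0..T}. \<bar>norm (u n \<omega> t) - norm (v \<omega> t)\<bar>) \<partial>M) \<longlonglongrightarrow> 0"
  shows "\<forall>e>0. (\<lambda>n. measure M {\<omega> \<in> space M. (SUP t\<in>{0..T}. norm (u n \<omega> t - v \<omega> t)) > e})
           \<longlonglongrightarrow> 0"
proof (intro allI impI)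
  fix e :: real assume e: "e > 0"
  interpret P: prob_space M by (rule assms(1))
  have T: "T > 0" by (rule assms(4))
  have Tne: "{0..T} \<noteq> {}" using T by simp
  note um = assms(7) and vm = assms(9)
  obtain C :: "'b set" where C: "countable C" "closure C = UNIV"
    using assms(2) unfolding separable_space_def by auto
  have Cne: "C \<noteq> {}" using C(2) by auto
  define ds where "ds = from_nat_into C"
  have dense: "\<exists>k. dist (ds k) x < g" if gp: "g > 0" for x g
  proof -
    have "x \<in> closure C" using C(2) by simp
    then obtain y where "y \<in> C" "dist y x < g" using gp closure_approachable by blast
    moreover have "y \<in> range ds" using \<open>y \<in> C\<close> Cne C(1) unfolding ds_def by simp
    ultimately show ?thesis by auto
  qed
  have "\<forall>k. \<exists>\<phi>. bounded_linear \<phi> \<and> (\<forall>x. \<bar>\<phi> x\<bar> \<le> norm x) \<and> \<phi> (ds k) = norm (ds k)"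
    using norming_functional by blast
  then obtain \<phi> where phi: "\<And>k. bounded_linear (\<phi> k)" "\<And>k x. \<bar>\<phi> k x\<bar> \<le> norm x"
    "\<And>k. \<phi> k (ds k) = norm (ds k)" by metis
  have phic: "continuous_on UNIV (\<phi> k)" for k
    using bounded_linear.continuous_on[OF phi(1) continuous_on_id] by simp
  have phidiff: "\<phi> k (x - y) = \<phi> k x - \<phi> k y" for k x y
    using bounded_linear.linear[OF phi(1)] by (simp add: linear_diff)
  have bndp: "\<And>\<omega> t. norm (apply_bcontfun (v \<omega>) t) \<le> norm (v \<omega>)" by (rule norm_bounded)
  have bndu: "\<And>n \<omega> t. norm (apply_bcontfun (u n \<omega>) t) \<le> norm (u n \<omega>)" by (rule norm_bounded)
  define bad where "bad n = {\<omega> \<in> space M. (SUP t\<in>{0..T}. norm (u n \<omega> t - v \<omega> t)) > e}" for n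
  show "(\<lambda>n. measure M (bad n)) \<longlonglongrightarrow> 0"
    unfolding tendsto_iff
  proof (intro allI impI)
    fix \<rho> :: real assume \<rho>: "\<rho> > 0"
    define Rs where "Rs m = {\<omega> \<in> space M. norm (v \<omega>) \<ge> real m}" for m :: nat
    have nvm: "(\<lambda>\<omega>. norm (v \<omega>)) \<in> borel_measurable M"
      using borel_measurable_continuous_on[OF continuous_on_norm_id vm] by simp
    have Rsm: "Rs m \<in> sets M" for m unfolding Rs_def using nvm by measurable
    have "(\<lambda>m. measure M (Rs m)) \<longlonglongrightarrow> measure M (\<Inter>m. Rs m)"
    proof (rule P.finite_Lim_measure_decseq)
      show "range Rs \<subseteq> sets M" using Rsm by auto
      show "decseq Rs" unfolding decseq_def Rs_def by auto
    qed
    moreover have "(\<Inter>m. Rs m) = {}"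
    proof (rule equals0I)
      fix \<omega> assume w: "\<omega> \<in> (\<Inter>m. Rs m)"
      obtain m where "norm (v \<omega>) < real m" using reals_Archimedean2 by blast
      moreover have "\<omega> \<in> Rs m" using w by blast
      ultimately show False unfolding Rs_def by auto
    qed
    ultimately have "(\<lambda>m. measure M (Rs m)) \<longlonglongrightarrow> 0" by simp
    from LIMSEQ_D[OF this, of "\<rho>/3"] obtain no where "\<forall>n\<ge>no. norm (measure M (Rs n) - 0) < \<rho>/3"
      using \<rho> by auto
    hence "measure M (Rs no) < \<rho>/3" by auto
    then obtain m where m: "measure M (Rs m) < \<rho>/3" by blast
    define R where "R = real m + 1"
    have e2: "e/2 > 0" using e by simp
    have R0: "R \<ge> 0" unfolding R_def by simp
    obtain \<eta> where eta: "\<eta> > 0" and etap: "\<And>(a::'b) d \<psi>. bounded_linear \<psi> \<Longrightarrow> (\<forall>x. \<bar>\<psi> x\<bar> \<le> norm x) \<Longrightarrow> \<psi> d = norm d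
     \<Longrightarrow> norm d \<le> R \<Longrightarrow> norm a \<le> norm d + \<eta> \<Longrightarrow> \<psi> a \<ge> norm d - \<eta> \<Longrightarrow> norm (a - d) \<le> e/2"
      by (rule uc_key'[OF assms(3) e2 R0]) (rule that)
    define \<gamma> where "\<gamma> = min (\<eta>/2) (min (e/4) 1)"
    have g: "\<gamma> > 0" "\<gamma> \<le> \<eta>/2" "\<gamma> \<le> e/4" "\<gamma> \<le> 1" using eta e by (auto simp: \<gamma>_def)
    define gs where "gs N \<omega> = (SUP t\<in>{0..T}. infdist (v \<omega> t) (ds ` {..N}))" for N :: nat and \<omega>
    define Bs where "Bs N = {\<omega> \<in> space M. gs N \<omega> \<ge> \<gamma>}" for N
    have idc: "continuous_on UNIV (\<lambda>x::'b. infdist x A)" for A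
      by (intro continuous_intros)
    have gsc: "continuous_on {0..T} (\<lambda>t. infdist (v \<omega> t) (ds ` {..N}))" for \<omega> N
      by (intro continuous_on_infdist continuous_on_apply_bcontfun)
    have gsm: "gs N \<in> borel_measurable M" for N
      unfolding gs_def by (rule meas_sup[OF meas_eval[OF vm idc] gsc T])
    have Bsm: "Bs N \<in> sets M" for N unfolding Bs_def using gsm[of N] by measurable
    have gsbdd: "bdd_above ((\<lambda>t. infdist (v \<omega> t) (ds ` {..N})) ` {0..T})" for \<omega> N
      by (rule bdd_cont_Icc[OF gsc])
    have "(\<lambda>N. measure M (Bs N)) \<longlonglongrightarrow> measure M (\<Inter>N. Bs N)"
    proof (rule P.finite_Lim_measure_decseq)
      show "range Bs \<subseteq> sets M" using Bsm by auto
      show "decseq Bs" unfolding decseq_Suc_iff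
      proof
        fix N
        have "gs (Suc N) \<omega> \<le> gs N \<omega>" for \<omega>
          unfolding gs_def
        proof (rule cSUP_mono[OF Tne gsbdd])
          fix t assume "t \<in> {0..T}"
          have "infdist (v \<omega> t) (ds ` {..Suc N}) \<le> infdist (v \<omega> t) (ds ` {..N})"
            by (rule infdist_mono) auto
          thus "\<exists>t'\<in>{0..T}. infdist (v \<omega> t) (ds ` {..Suc N}) \<le> infdist (v \<omega> t') (ds ` {..N})"
            using \<open>t \<in> {0..T}\<close> by blast
        qed
        thus "Bs (Suc N) \<subseteq> Bs N" unfolding Bs_def by (auto intro: order_trans)
      qed
    qed
    moreover have "(\<Inter>N. Bs N) = {}"
    proof -
      have "\<exists>N. \<omega> \<notin> Bs N" for \<omega>
      proof -
        have K: "compact (apply_bcontfun (v \<omega>) ` {0..T})"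
          by (rule compact_continuous_image[OF continuous_on_apply_bcontfun compact_Icc])
        have cov: "apply_bcontfun (v \<omega>) ` {0..T} \<subseteq> (\<Union>k\<in>UNIV. ball (ds k) (\<gamma>/2))"
        proof
          fix x assume "x \<in> apply_bcontfun (v \<omega>) ` {0..T}"
          obtain k where "dist (ds k) x < \<gamma>/2" using dense[of "\<gamma>/2" x] g(1) by auto
          thus "x \<in> (\<Union>k\<in>UNIV. ball (ds k) (\<gamma>/2))" by (auto simp: mem_ball)
        qed
        have opn: "\<And>k. k \<in> UNIV \<Longrightarrow> open (ball (ds k) (\<gamma>/2))" by simp
        obtain D where D0: "D \<subseteq> UNIV" and D: "finite D" "apply_bcontfun (v \<omega>) ` {0..T} \<subseteq> (\<Union>k\<in>D. ball (ds k) (\<gamma>/2))"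
          by (rule compactE_image[OF K opn cov]) (auto intro: that)
        define N where "N = Max (insert 0 D)"
        have kN: "k \<le> N" if "k \<in> D" for k unfolding N_def by (rule Max_ge) (use D(1) that in auto)
        have "gs N \<omega> \<le> \<gamma>/2" unfolding gs_def
        proof (rule cSUP_least[OF Tne])
          fix t assume t: "t \<in> {0..T}"
          have "apply_bcontfun (v \<omega>) t \<in> (\<Union>k\<in>D. ball (ds k) (\<gamma>/2))" using D(2) t by blast
          then obtain k where k0: "k \<in> D" "apply_bcontfun (v \<omega>) t \<in> ball (ds k) (\<gamma>/2)" by blast
          hence k: "k \<in> D" "dist (ds k) (v \<omega> t) < \<gamma>/2" by (auto simp: mem_ball)
          have "infdist (v \<omega> t) (ds ` {..N}) \<le> dist (v \<omega> t) (ds k)"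
            by (rule infdist_le) (use kN k in auto)
          thus "infdist (v \<omega> t) (ds ` {..N}) \<le> \<gamma>/2" using k by (simp add: dist_commute)
        qed
        hence "\<omega> \<notin> Bs N" using g(1) unfolding Bs_def by auto
        thus ?thesis by blast
      qed
      thus ?thesis by blast
    qed
    ultimately have "(\<lambda>N. measure M (Bs N)) \<longlonglongrightarrow> 0" by simp
    from LIMSEQ_D[OF this, of "\<rho>/3"] obtain no where "\<forall>n\<ge>no. norm (measure M (Bs n) - 0) < \<rho>/3"
      using \<rho> by auto
    hence "measure M (Bs no) < \<rho>/3" by auto
    then obtain N where N: "measure M (Bs N) < \<rho>/3" by blast
    define X where "X k n \<omega> = (SUP t\<in>{0..T}. \<bar>\<phi> k (u n \<omega> t - v \<omega> t)\<bar>)" for k n \<omega>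
    define Y where "Y n \<omega> = (SUP t\<in>{0..T}. \<bar>norm (u n \<omega> t) - norm (v \<omega> t)\<bar>)" for n \<omega>
    define Xs where "Xs k n = {\<omega> \<in> space M. X k n \<omega> \<ge> \<gamma>}" for k n
    define Ys where "Ys n = {\<omega> \<in> space M. Y n \<omega> \<ge> \<gamma>}" for n
    have Bint: "integrable M (\<lambda>\<omega>. norm (u n \<omega>) + norm (v \<omega>))" for n
      using assms(8,10) by (rule Bochner_Integration.integrable_add)
    have Xc: "continuous_on {0..T} (\<lambda>t. \<bar>\<phi> k (u n \<omega> t - v \<omega> t)\<bar>)" for k n \<omega>
      by (intro continuous_intros bounded_linear.continuous_on[OF phi(1)] continuous_on_apply_bcontfun)
    have Xm: "(\<lambda>\<omega>. \<bar>\<phi> k (u n \<omega> t - v \<omega> t)\<bar>) \<in> borel_measurable M" for k n t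
    proof -
      have "(\<lambda>\<omega>. \<bar>\<phi> k (u n \<omega> t) - \<phi> k (v \<omega> t)\<bar>) \<in> borel_measurable M"
        using meas_eval[OF um phic] meas_eval[OF vm phic] by measurable
      thus ?thesis by (simp add: phidiff)
    qed
    have Xb: "\<bar>\<phi> k (u n \<omega> t - v \<omega> t)\<bar> \<le> norm (u n \<omega>) + norm (v \<omega>)" for k n \<omega> t
      using phi(2)[of k "u n \<omega> t - v \<omega> t"] norm_triangle_ineq4[of "u n \<omega> t" "v \<omega> t"] bndp bndu
      by (smt (verit))
    have Yc: "continuous_on {0..T} (\<lambda>t. \<bar>norm (u n \<omega> t) - norm (v \<omega> t)\<bar>)" for n \<omega>
      by (intro continuous_intros continuous_on_apply_bcontfun)
    have Ym: "(\<lambda>\<omega>. \<bar>norm (u n \<omega> t) - norm (v \<omega> t)\<bar>) \<in> borel_measurable M" for n t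
      using meas_eval[OF um continuous_on_norm_id] meas_eval[OF vm continuous_on_norm_id] by measurable
    have Yb: "\<bar>norm (u n \<omega> t) - norm (v \<omega> t)\<bar> \<le> norm (u n \<omega>) + norm (v \<omega>)" for n \<omega> t
      using bndp bndu by (smt (verit) norm_ge_zero)
    note MX = markov_sup[OF assms(1) T Xm Xc abs_ge_zero Xb Bint g(1)]
    note MY = markov_sup[OF assms(1) T Ym Yc abs_ge_zero Yb Bint g(1)]
    have Xsm: "Xs k n \<in> sets M" for k n
      using meas_sup[OF Xm Xc T, of k n] unfolding Xs_def X_def by measurable
    have Ysm: "Ys n \<in> sets M" for n
      using meas_sup[OF Ym Yc T, of n] unfolding Ys_def Y_def by measurable
    have Xlim: "(\<lambda>n. measure M (Xs k n)) \<longlonglongrightarrow> 0" for k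
    proof (rule tendsto_sandwich[of "\<lambda>n. 0" _ _ "\<lambda>n. (\<integral>\<omega>. X k n \<omega> \<partial>M) / \<gamma>"])
      show "\<forall>\<^sub>F n in sequentially. 0 \<le> measure M (Xs k n)" by simp
      show "\<forall>\<^sub>F n in sequentially. measure M (Xs k n) \<le> (\<integral>\<omega>. X k n \<omega> \<partial>M) / \<gamma>"
        using MX(2) unfolding Xs_def X_def by simp
      show "(\<lambda>n. 0) \<longlonglongrightarrow> (0::real)" by simp
      show "(\<lambda>n. (\<integral>\<omega>. X k n \<omega> \<partial>M) / \<gamma>) \<longlonglongrightarrow> 0"
        using tendsto_divide_zero[OF assms(12)[OF phi(1)[of k]], of \<gamma>] unfolding X_def by simp
    qed
    have Ylim: "(\<lambda>n. measure M (Ys n)) \<longlonglongrightarrow> 0"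
    proof (rule tendsto_sandwich[of "\<lambda>n. 0" _ _ "\<lambda>n. (\<integral>\<omega>. Y n \<omega> \<partial>M) / \<gamma>"])
      show "\<forall>\<^sub>F n in sequentially. 0 \<le> measure M (Ys n)" by simp
      show "\<forall>\<^sub>F n in sequentially. measure M (Ys n) \<le> (\<integral>\<omega>. Y n \<omega> \<partial>M) / \<gamma>"
        using MY(2) unfolding Ys_def Y_def by simp
      show "(\<lambda>n. 0) \<longlonglongrightarrow> (0::real)" by simp
      show "(\<lambda>n. (\<integral>\<omega>. Y n \<omega> \<partial>M) / \<gamma>) \<longlonglongrightarrow> 0"
        using tendsto_divide_zero[OF assms(13), of \<gamma>] unfolding Y_def by simp
    qed
    have "(\<lambda>n. (\<Sum>k\<le>N. measure M (Xs k n)) + measure M (Ys n)) \<longlonglongrightarrow> 0 + 0"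
      by (intro tendsto_add tendsto_null_sum Xlim Ylim)
    hence lim0: "(\<lambda>n. (\<Sum>k\<le>N. measure M (Xs k n)) + measure M (Ys n)) \<longlonglongrightarrow> 0" by simp
    have ev: "\<forall>\<^sub>F n in sequentially. (\<Sum>k\<le>N. measure M (Xs k n)) + measure M (Ys n) < \<rho>/3"
      by (rule order_tendstoD(2)[OF lim0]) (use \<rho> in simp)
    have incl: "bad n \<subseteq> Rs m \<union> Bs N \<union> (\<Union>k\<in>{..N}. Xs k n) \<union> Ys n" for n
    proof
      fix \<omega> assume bw: "\<omega> \<in> bad n"
      hence sp: "\<omega> \<in> space M" unfolding bad_def by auto
      show "\<omega> \<in> Rs m \<union> Bs N \<union> (\<Union>k\<in>{..N}. Xs k n) \<union> Ys n"
      proof (rule ccontr)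
        assume "\<omega> \<notin> Rs m \<union> Bs N \<union> (\<Union>k\<in>{..N}. Xs k n) \<union> Ys n"
        hence nv: "norm (v \<omega>) < real m" and gN: "gs N \<omega> < \<gamma>" and Xk: "\<And>k. k \<le> N \<Longrightarrow> X k n \<omega> < \<gamma>"
          and Yn: "Y n \<omega> < \<gamma>" using sp unfolding Rs_def Bs_def Xs_def Ys_def by (auto simp: not_le)
        have "(SUP t\<in>{0..T}. norm (u n \<omega> t - v \<omega> t)) \<le> 3 * e / 4"
        proof (rule cSUP_least[OF Tne])
          fix t assume t: "t \<in> {0..T}"
          define a where "a = apply_bcontfun (u n \<omega>) t"
          define w where "w = apply_bcontfun (v \<omega>) t"
          have "infdist w (ds ` {..N}) \<le> gs N \<omega>" unfolding gs_def w_def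
            by (rule cSUP_upper[OF t gsbdd])
          hence "infdist w (ds ` {..N}) < \<gamma>" using gN by simp
          hence "(INF x\<in>ds ` {..N}. dist w x) < \<gamma>" by (subst (asm) infdist_notempty) auto
          then obtain d where d: "d \<in> ds ` {..N}" "dist w d < \<gamma>"
            by (subst (asm) cINF_less_iff) (auto intro: bdd_belowI[where m=0])
          then obtain k where k: "k \<le> N" "d = ds k" by auto
          have Xt: "\<bar>\<phi> k (a - w)\<bar> < \<gamma>"
          proof -
            have "\<bar>\<phi> k (a - w)\<bar> \<le> X k n \<omega>" unfolding X_def a_def w_def
              by (rule cSUP_upper[OF t bdd_cont_Icc[OF Xc]])
            thus ?thesis using Xk[OF k(1)] by simp
          qed
          have Yt: "\<bar>norm a - norm w\<bar> < \<gamma>"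
          proof -
            have "\<bar>norm a - norm w\<bar> \<le> Y n \<omega>" unfolding Y_def a_def w_def
              by (rule cSUP_upper[OF t bdd_cont_Icc[OF Yc]])
            thus ?thesis using Yn by simp
          qed
          have nw: "norm w < real m" using bndp[of \<omega> t] nv unfolding w_def by simp
          have dw: "norm (w - d) < \<gamma>" using d(2) by (simp add: dist_norm)
          have nd: "norm d \<le> R" using norm_triangle_ineq2[of d w] dw nw g unfolding R_def
            by (smt (verit) norm_minus_commute)
          have na: "norm a \<le> norm d + \<eta>"
          proof -
            have "norm a - norm w < \<gamma>" using Yt by (simp add: abs_less_iff)
            thus ?thesis using norm_triangle_ineq2[of w d] dw g by linarith
          qed
          have pa: "\<phi> k a \<ge> norm d - \<eta>"
          proof -
            have "\<phi> k a - \<phi> k w > - \<gamma>" using Xt phidiff[of k a w] by simp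
            moreover have "\<phi> k w - \<phi> k d \<ge> - norm (w - d)" using phi(2)[of k "w - d"] phidiff[of k w d] by simp
            moreover have "\<phi> k d = norm d" using phi(3) k(2) by simp
            ultimately show ?thesis using dw g by simp
          qed
          have "norm (a - d) \<le> e/2"
            by (rule etap[OF phi(1) _ _ nd na pa]) (use phi k in auto)
          hence "norm (a - w) \<le> e/2 + \<gamma>"
            using norm_triangle_ineq[of "a - d" "d - w"] dw by (simp add: norm_minus_commute) 
          thus "norm (u n \<omega> t - v \<omega> t) \<le> 3 * e / 4" using g unfolding a_def w_def by simp
        qed
        thus False using bw e unfolding bad_def by simp
      qed
    qed
    have mb: "measure M (bad n) \<le> measure M (Rs m) + measure M (Bs N) + (\<Sum>k\<le>N. measure M (Xs k n)) + measure M (Ys n)" for n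
    proof -
      have U: "(\<Union>k\<in>{..N}. Xs k n) \<in> sets M" using Xsm by auto
      have "measure M (bad n) \<le> measure M (Rs m \<union> Bs N \<union> (\<Union>k\<in>{..N}. Xs k n) \<union> Ys n)"
        by (rule P.finite_measure_mono[OF incl]) (use Rsm Bsm U Ysm in auto)
      also have "\<dots> \<le> measure M (Rs m \<union> Bs N \<union> (\<Union>k\<in>{..N}. Xs k n)) + measure M (Ys n)"
        by (rule measure_Un_le) (use Rsm Bsm U Ysm in auto)
      also have "measure M (Rs m \<union> Bs N \<union> (\<Union>k\<in>{..N}. Xs k n)) \<le> measure M (Rs m \<union> Bs N) + measure M (\<Union>k\<in>{..N}. Xs k n)"
        by (rule measure_Un_le) (use Rsm Bsm U in auto)
      also have "measure M (Rs m \<union> Bs N) \<le> measure M (Rs m) + measure M (Bs N)"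
        by (rule measure_Un_le) (use Rsm Bsm in auto)
      also have "measure M (\<Union>k\<in>{..N}. Xs k n) \<le> (\<Sum>k\<le>N. measure M (Xs k n))"
        by (rule P.finite_measure_subadditive_finite) (use Xsm in auto)
      finally show ?thesis by simp
    qed
    show "\<forall>\<^sub>F n in sequentially. dist (measure M (bad n)) 0 < \<rho>"
      using ev
    proof (rule eventually_mono)
      fix n assume "(\<Sum>k\<le>N. measure M (Xs k n)) + measure M (Ys n) < \<rho>/3"
      thus "dist (measure M (bad n)) 0 < \<rho>" using mb[of n] m N by simp
    qed
  qed
qed

end
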